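(* Let $f(x)=\frac1n\sum_{i=1}^nf_i(x)$ on $\mathbb{R}^d$, where each $f_i$ is convex and $L_i$-smooth, and let $x^*$ be a minimizer of $f$. Consider SGD with the SPS$^\ell_{\max}$ stepsize (defined in the context), and let $\alpha:=\min\{\frac1{2cL_{\max}},\gamma_b\}$ with $L_{\max}=\max_iL_i$. (i) If $c=1$, then for every $K\ge1$, $\mathbb{E}[f(\bar x^K)-f(x^* )]\le\frac{\|x^0-x^*\|^2}{\alpha K}+\frac{2\gamma_b\hat\sigma_B^2}{\alpha}$, where $\bar x^K=\frac1K\sum_{k=0}^{K-1}x^k$. (ii) If in addition $f$ is $\mu$-strongly convex and $c\ge1/2$, then for every $k\ge0$, $\mathbb{E}\|x^k-x^*\|^2\le(1-\mu\alpha)^k\|x^0-x^*\|^2+\frac{2\gamma_b\hat\sigma_B^2}{\mu\alpha}$.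
   Context: Minibatches: fix a batch size $B$; at each iteration a subset $\mathcal S_k\subseteq[n]$, $|\mathcal S_k|=B$, is sampled uniformly at random, independently across iterations. For $\mathcal S\subseteq[n]$, $f_{\mathcal S}:=\frac1{|\mathcal S|}\sum_{i\in\mathcal S}f_i$, $f^*_{\mathcal S}:=\inf_xf_{\mathcal S}(x)$ (assumed finite), and $\ell^*_{\mathcal S}$ is a given real number with $\ell^*_{\mathcal S}\le f^*_{\mathcal S}$. SGD: $x^{k+1}=x^k-\gamma_k\nabla f_{\mathcal S_k}(x^k)$ from given $x^0$. SPS$^\ell_{\max}$ stepsize: $\gamma_k=\min\left\{\frac{f_{\mathcal S_k}(x^k)-\ell^*_{\mathcal S_k}}{c\|\nabla f_{\mathcal S_k}(x^k)\|^2},\ \gamma_b\right\}$ with constants $c,\gamma_b>0$; if $\nabla f_{\mathcal S_k}(x^k)=0$ the iterate is not updated. $\hat\sigma_B^2:=\mathbb{E}_{\mathcal S}[f_{\mathcal S}(x^* )-\ell^*_{\mathcal S}]=f(x^* )-\mathbb{E}_{\mathcal S}[\ell^*_{\mathcal S}]$ with $\mathcal S$ uniform over subsets of size $B$. *)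

theory Defs
  imports "HOL-Analysis.Analysis"
begin

text \<open>Minibatches of size B from the index set {0..<n} (indices 0..n-1 stand for 1..n).\<close>
definition batches :: "nat \<Rightarrow> nat \<Rightarrow> nat set set" where
  "batches n B = {S. S \<subseteq> {..<n} \<and> card S = B}"

definition fS :: "(nat \<Rightarrow> 'a \<Rightarrow> real) \<Rightarrow> nat set \<Rightarrow> 'a \<Rightarrow> real" where
  "fS f S x = (\<Sum>i\<in>S. f i x) / real (card S)"

definition gS :: "(nat \<Rightarrow> 'a \<Rightarrow> 'a::real_vector) \<Rightarrow> nat set \<Rightarrow> 'a \<Rightarrow> 'a" where
  "gS g S x = (1 / real (card S)) *\<^sub>R (\<Sum>i\<in>S. g i x)"

definition sps_step ::
  "(nat \<Rightarrow> 'a \<Rightarrow> real) \<Rightarrow> (nat \<Rightarrow> 'a \<Rightarrow> 'a::real_inner) \<Rightarrow> (nat set \<Rightarrow> real)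
   \<Rightarrow> real \<Rightarrow> real \<Rightarrow> nat set \<Rightarrow> 'a \<Rightarrow> 'a" where
  "sps_step f g ell c gb S x =
     (if gS g S x = 0 then x
      else x - (min ((fS f S x - ell S) / (c * (norm (gS g S x))\<^sup>2)) gb) *\<^sub>R gS g S x)"

definition sps_iter ::
  "(nat \<Rightarrow> 'a \<Rightarrow> real) \<Rightarrow> (nat \<Rightarrow> 'a \<Rightarrow> 'a::real_inner) \<Rightarrow> (nat set \<Rightarrow> real)
   \<Rightarrow> real \<Rightarrow> real \<Rightarrow> 'a \<Rightarrow> nat set list \<Rightarrow> 'a" where
  "sps_iter f g ell c gb x0 ss = foldl (\<lambda>x S. sps_step f g ell c gb S x) x0 ss"

text \<open>Expectation over k i.i.d. uniform minibatches S_0,...,S_{k-1}: average over all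
  sequences of length k in the (finite) set of batches.\<close>
definition batch_expect :: "nat set set \<Rightarrow> nat \<Rightarrow> (nat set list \<Rightarrow> real) \<Rightarrow> real" where
  "batch_expect Bs k h =
     (\<Sum>ss\<in>{ss. length ss = k \<and> set ss \<subseteq> Bs}. h ss) / real (card Bs) ^ k"

definition sigma_hat :: "(nat \<Rightarrow> 'a \<Rightarrow> real) \<Rightarrow> (nat set \<Rightarrow> real) \<Rightarrow> nat \<Rightarrow> nat \<Rightarrow> 'a \<Rightarrow> real" where
  "sigma_hat f ell n B xs =
     (\<Sum>S\<in>batches n B. fS f S xs - ell S) / real (card (batches n B))"

definition strongly_convex :: "real \<Rightarrow> ('a::real_normed_vector \<Rightarrow> real) \<Rightarrow> bool" where
  "strongly_convex \<mu> h \<longleftrightarrow> (\<forall>x y t. 0 \<le> t \<and> t \<le> 1 \<longrightarrow>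
     h ((1 - t) *\<^sub>R x + t *\<^sub>R y) \<le> (1 - t) * h x + t * h y - \<mu> / 2 * t * (1 - t) * (norm (x - y))\<^sup>2)"

end

theory Submission
  imports Defs
begin


lemma line_deriv:
  fixes h :: "'a::real_inner \<Rightarrow> real"
  assumes "\<And>p. (h has_derivative (\<lambda>v. v \<bullet> G p)) (at p)"
  shows "((\<lambda>t. h (y + t *\<^sub>R d)) has_real_derivative (d \<bullet> G (y + t *\<^sub>R d))) (at t within T)"
proof -
  have d1: "((\<lambda>t. y + t *\<^sub>R d) has_derivative (\<lambda>s. s *\<^sub>R d)) (at t within T)"
    by (auto intro!: derivative_eq_intros)
  have "((\<lambda>t. h (y + t *\<^sub>R d)) has_derivative (\<lambda>s. (s *\<^sub>R d) \<bullet> G (y + t *\<^sub>R d))) (at t within T)"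
    using has_derivative_compose[OF d1 assms] .
  moreover have "(\<lambda>s. (s *\<^sub>R d) \<bullet> G (y + t *\<^sub>R d)) = (*) (d \<bullet> G (y + t *\<^sub>R d))"
    by (auto simp: fun_eq_iff)
  ultimately show ?thesis by (simp add: has_field_derivative_def)
qed

lemma descent:
  fixes h :: "'a::real_inner \<Rightarrow> real"
  assumes der: "\<And>p. (h has_derivative (\<lambda>v. v \<bullet> G p)) (at p)"
    and lip: "\<And>p q. norm (G p - G q) \<le> L * norm (p - q)"
  shows "h (y + d) \<le> h y + d \<bullet> G y + L / 2 * (norm d)\<^sup>2"
proof -
  define \<psi> where "\<psi> t = h (y + t *\<^sub>R d) - t * (d \<bullet> G y) - L / 2 * t\<^sup>2 * (norm d)\<^sup>2" for t
  have D: "(\<psi> has_real_derivative (d \<bullet> G (y + t *\<^sub>R d) - d \<bullet> G y - L * t * (norm d)\<^sup>2)) (at t)" for t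
    unfolding \<psi>_def
    by (rule line_deriv[OF der] derivative_eq_intros refl | simp)+
  have "\<psi> 0 \<ge> \<psi> 1"
  proof (rule DERIV_nonpos_imp_nonincreasing[where f=\<psi>])
    fix t :: real assume t: "0 \<le> t" "t \<le> 1"
    have "d \<bullet> G (y + t *\<^sub>R d) - d \<bullet> G y = d \<bullet> (G (y + t *\<^sub>R d) - G y)" by (simp add: inner_diff_right)
    also have "\<dots> \<le> norm d * norm (G (y + t *\<^sub>R d) - G y)" by (rule norm_cauchy_schwarz)
    also have "\<dots> \<le> norm d * (L * norm (t *\<^sub>R d))" using lip[of "y + t *\<^sub>R d" y] by (intro mult_left_mono) auto
    also have "\<dots> = L * t * (norm d)\<^sup>2" using t by (simp add: power2_eq_square)
    finally have "d \<bullet> G (y + t *\<^sub>R d) - d \<bullet> G y - L * t * (norm d)\<^sup>2 \<le> 0" by simp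
    then show "\<exists>z. (\<psi> has_real_derivative z) (at t) \<and> z \<le> 0" using D by blast
  qed simp
  then show ?thesis by (simp add: \<psi>_def algebra_simps)
qed

lemma sc_grad:
  fixes h :: "'a::real_normed_vector \<Rightarrow> real"
  assumes sc: "strongly_convex \<mu> h" and der: "(h has_derivative D) (at x)"
  shows "h y \<ge> h x + D (y - x) + \<mu> / 2 * (norm (y - x))\<^sup>2"
proof -
  define d where "d = y - x"
  have bl: "bounded_linear D" using der by (rule has_derivative_bounded_linear)
  have d1: "((\<lambda>t. x + t *\<^sub>R d) has_derivative (\<lambda>s. s *\<^sub>R d)) (at 0)"
    by (auto intro!: derivative_eq_intros)
  have "((\<lambda>t. h (x + t *\<^sub>R d)) has_derivative (\<lambda>s. D (s *\<^sub>R d))) (at 0)"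
    using has_derivative_compose[OF d1] der by simp
  moreover have "(\<lambda>s. D (s *\<^sub>R d)) = (*) (D d)"
    using bounded_linear.linear[OF bl] by (auto simp: fun_eq_iff linear_iff)
  ultimately have "((\<lambda>t. h (x + t *\<^sub>R d)) has_real_derivative D d) (at 0)"
    by (simp add: has_field_derivative_def)
  then have "((\<lambda>s. (h (x + s *\<^sub>R d) - h x) / s) \<longlongrightarrow> D d) (at 0)"
    by (simp add: DERIV_def)
  then have L1: "((\<lambda>s. (h (x + s *\<^sub>R d) - h x) / s) \<longlongrightarrow> D d) (at_right 0)"
    by (rule tendsto_within_subset) simp
  have L2: "((\<lambda>s. h y - h x - \<mu> / 2 * (1 - s) * (norm d)\<^sup>2) \<longlongrightarrow> h y - h x - \<mu> / 2 * (1 - 0) * (norm d)\<^sup>2) (at_right 0)"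
    by (intro tendsto_intros)
  have ev: "eventually (\<lambda>s. (h (x + s *\<^sub>R d) - h x) / s \<le> h y - h x - \<mu> / 2 * (1 - s) * (norm d)\<^sup>2) (at_right (0::real))"
    using eventually_at_right_real[OF zero_less_one]
  proof (rule eventually_mono)
    fix s :: real assume s: "s \<in> {0<..<1}"
    have "h ((1 - s) *\<^sub>R x + s *\<^sub>R y) \<le> (1 - s) * h x + s * h y - \<mu> / 2 * s * (1 - s) * (norm (x - y))\<^sup>2"
      using sc s unfolding strongly_convex_def by auto
    moreover have "(1 - s) *\<^sub>R x + s *\<^sub>R y = x + s *\<^sub>R d" by (simp add: d_def algebra_simps)
    moreover have "norm (x - y) = norm d" by (simp add: d_def norm_minus_commute)
    ultimately have "h (x + s *\<^sub>R d) - h x \<le> s * (h y - h x - \<mu> / 2 * (1 - s) * (norm d)\<^sup>2)"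
      by (simp add: algebra_simps)
    then show "(h (x + s *\<^sub>R d) - h x) / s \<le> h y - h x - \<mu> / 2 * (1 - s) * (norm d)\<^sup>2"
      using s by (simp add: divide_simps mult.commute)
  qed
  have "D d \<le> h y - h x - \<mu> / 2 * (1 - 0) * (norm d)\<^sup>2"
    using tendsto_le[OF trivial_limit_at_right_real L2 L1 ev] .
  then show ?thesis by (simp add: d_def)
qed

lemma convex_sc0:
  fixes h :: "'a::real_normed_vector \<Rightarrow> real"
  assumes "convex_on UNIV h" shows "strongly_convex 0 h"
  using convex_onD[OF assms] unfolding strongly_convex_def by simp

lemma convex_on_sum_fun:
  fixes f :: "nat \<Rightarrow> 'a::real_vector \<Rightarrow> real"
  assumes "finite I" "\<And>i. i \<in> I \<Longrightarrow> convex_on UNIV (f i)"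
  shows "convex_on UNIV (\<lambda>x. \<Sum>i\<in>I. f i x)"
  using assms
proof (induction I rule: finite_induct)
  case empty then show ?case by (simp add: convex_on_const)
next
  case (insert a I) then show ?case by (simp add: convex_on_add)
qed

lemma convex_fS:
  assumes "finite S" "\<And>i. i \<in> S \<Longrightarrow> convex_on UNIV (f i)"
  shows "convex_on UNIV (fS f S)"
proof -
  have "convex_on UNIV (\<lambda>x. (1 / real (card S)) * (\<Sum>i\<in>S. f i x))"
    by (rule convex_on_cmul) (auto intro: convex_on_sum_fun assms)
  moreover have "(\<lambda>x. (1 / real (card S)) * (\<Sum>i\<in>S. f i x)) = fS f S"
    by (auto simp: fun_eq_iff fS_def)
  ultimately show ?thesis by simp
qed

lemma deriv_fS:
  fixes f :: "nat \<Rightarrow> 'a::real_inner \<Rightarrow> real"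
  assumes "finite S" "\<And>i. i \<in> S \<Longrightarrow> (f i has_derivative (\<lambda>v. v \<bullet> g i p)) (at p)"
  shows "(fS f S has_derivative (\<lambda>v. v \<bullet> gS g S p)) (at p)"
proof -
  have "((\<lambda>x. \<Sum>i\<in>S. f i x) has_derivative (\<lambda>v. \<Sum>i\<in>S. v \<bullet> g i p)) (at p)"
    using assms(2) by (rule has_derivative_sum)
  then have "((\<lambda>x. (1 / real (card S)) * (\<Sum>i\<in>S. f i x)) has_derivative (\<lambda>v. (1 / real (card S)) * (\<Sum>i\<in>S. v \<bullet> g i p))) (at p)"
    by (rule has_derivative_mult_right)
  moreover have "(\<lambda>x. (1 / real (card S)) * (\<Sum>i\<in>S. f i x)) = fS f S"
    by (auto simp: fun_eq_iff fS_def)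
  moreover have "(\<lambda>v. (1 / real (card S)) * (\<Sum>i\<in>S. v \<bullet> g i p)) = (\<lambda>v. v \<bullet> gS g S p)"
    by (auto simp: fun_eq_iff gS_def inner_sum_right)
  ultimately show ?thesis by simp
qed

lemma lip_gS:
  fixes g :: "nat \<Rightarrow> 'a::real_normed_vector \<Rightarrow> 'a"
  assumes "finite S" "S \<noteq> {}" "\<And>i. i \<in> S \<Longrightarrow> norm (g i p - g i q) \<le> Lm * norm (p - q)"
  shows "norm (gS g S p - gS g S q) \<le> Lm * norm (p - q)"
proof -
  have cS: "real (card S) > 0" using assms by auto
  have "gS g S p - gS g S q = (1 / real (card S)) *\<^sub>R (\<Sum>i\<in>S. g i p - g i q)"
    by (simp add: gS_def sum_subtractf scaleR_diff_right)
  then have "norm (gS g S p - gS g S q) = (1 / real (card S)) * norm (\<Sum>i\<in>S. g i p - g i q)"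
    using cS by simp
  also have "\<dots> \<le> (1 / real (card S)) * (\<Sum>i\<in>S. norm (g i p - g i q))"
    using cS by (intro mult_left_mono norm_sum) auto
  also have "\<dots> \<le> (1 / real (card S)) * (\<Sum>i\<in>S. Lm * norm (p - q))"
    using cS by (intro mult_left_mono sum_mono assms(3)) auto
  also have "\<dots> = Lm * norm (p - q)" using cS by simp
  finally show ?thesis .
qed

lemma batch_count:
  assumes "1 \<le> B" "i < n"
  shows "card {S \<in> batches n B. i \<in> S} = (n - 1) choose (B - 1)"
proof -
  have eq: "{S \<in> batches n B. i \<in> S} = insert i ` {T. T \<subseteq> {..<n} - {i} \<and> card T = B - 1}"
  proof (intro set_eqI iffI)
    fix S assume S: "S \<in> {S \<in> batches n B. i \<in> S}"
    then have fin: "finite S" by (auto simp: batches_def intro: finite_subset)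
    have "S = insert i (S - {i})" using S by auto
    moreover have "S - {i} \<in> {T. T \<subseteq> {..<n} - {i} \<and> card T = B - 1}"
      using S fin by (auto simp: batches_def)
    ultimately show "S \<in> insert i ` {T. T \<subseteq> {..<n} - {i} \<and> card T = B - 1}" by blast
  next
    fix S assume "S \<in> insert i ` {T. T \<subseteq> {..<n} - {i} \<and> card T = B - 1}"
    then obtain T where T: "T \<subseteq> {..<n} - {i}" "card T = B - 1" "S = insert i T" by auto
    have fin: "finite T" using T(1) by (auto intro: finite_subset)
    have "i \<notin> T" using T by auto
    then have "card S = B" using T fin assms by simp
    then show "S \<in> {S \<in> batches n B. i \<in> S}" using T assms by (auto simp: batches_def)
  qed
  have inj: "inj_on (insert i) {T. T \<subseteq> {..<n} - {i} \<and> card T = B - 1}"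
    by (rule inj_onI) (metis Diff_iff insertCI insert_Diff1 mem_Collect_eq singletonI subset_iff Diff_insert_absorb)
  have "card {S \<in> batches n B. i \<in> S} = card {T. T \<subseteq> {..<n} - {i} \<and> card T = B - 1}"
    unfolding eq by (rule card_image[OF inj])
  also have "\<dots> = card ({..<n} - {i}) choose (B - 1)" by (rule n_subsets) simp
  also have "card ({..<n} - {i}) = n - 1" using assms by simp
  finally show ?thesis .
qed

lemma card_batches: "card (batches n B) = n choose B"
  unfolding batches_def using n_subsets[of "{..<n}" B] by simp

lemma finite_batches: "finite (batches n B)"
  unfolding batches_def by (rule finite_subset[of _ "Pow {..<n}"]) auto

lemma batches_ne: "B \<le> n \<Longrightarrow> batches n B \<noteq> {}"
proof -
  assume "B \<le> n"
  then have "{..<B} \<in> batches n B" by (auto simp: batches_def)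
  then show ?thesis by blast
qed

lemma batch_sum:
  fixes v :: "nat \<Rightarrow> 'b::real_vector"
  assumes "1 \<le> B" "B \<le> n"
  shows "(\<Sum>S\<in>batches n B. (1 / real (card S)) *\<^sub>R (\<Sum>i\<in>S. v i))
         = (real (card (batches n B)) / real n) *\<^sub>R (\<Sum>i<n. v i)"
proof -
  let ?Bs = "batches n B"
  have "(\<Sum>S\<in>?Bs. (1 / real (card S)) *\<^sub>R (\<Sum>i\<in>S. v i)) = (\<Sum>S\<in>?Bs. (1 / real B) *\<^sub>R (\<Sum>i\<in>{i \<in> {..<n}. i \<in> S}. v i))"
  proof (rule sum.cong)
    fix S assume "S \<in> ?Bs"
    then have "card S = B" "{i \<in> {..<n}. i \<in> S} = S" by (auto simp: batches_def)
    then show "(1 / real (card S)) *\<^sub>R (\<Sum>i\<in>S. v i) = (1 / real B) *\<^sub>R (\<Sum>i\<in>{i \<in> {..<n}. i \<in> S}. v i)" by simp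
  qed simp
  also have "\<dots> = (1 / real B) *\<^sub>R (\<Sum>S\<in>?Bs. \<Sum>i\<in>{i \<in> {..<n}. i \<in> S}. v i)"
    by (simp add: scaleR_sum_right)
  also have "(\<Sum>S\<in>?Bs. \<Sum>i\<in>{i \<in> {..<n}. i \<in> S}. v i) = (\<Sum>i<n. \<Sum>S\<in>{S \<in> ?Bs. i \<in> S}. v i)"
    by (rule sum.swap_restrict) (auto simp: finite_batches)
  also have "\<dots> = (\<Sum>i<n. real ((n - 1) choose (B - 1)) *\<^sub>R v i)"
  proof (rule sum.cong)
    fix i assume "i \<in> {..<n}"
    then have "card {S \<in> ?Bs. i \<in> S} = (n - 1) choose (B - 1)" using assms by (intro batch_count) auto
    then show "(\<Sum>S\<in>{S \<in> ?Bs. i \<in> S}. v i) = real ((n - 1) choose (B - 1)) *\<^sub>R v i"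
      by (simp add: sum_constant_scaleR)
  qed simp
  also have "(1 / real B) *\<^sub>R \<dots> = ((real ((n - 1) choose (B - 1))) / real B) *\<^sub>R (\<Sum>i<n. v i)"
    by (simp add: scaleR_sum_right)
  also have "(real ((n - 1) choose (B - 1))) / real B = real (card ?Bs) / real n"
  proof -
    have "Suc (B - 1) * (n choose Suc (B - 1)) = n * ((n - 1) choose (B - 1))" by (rule binomial_absorption)
    then have "real B * real (n choose B) = real n * real ((n - 1) choose (B - 1))"
      using assms by (metis Suc_diff_1 of_nat_mult less_le_trans zero_less_one)
    then show ?thesis using assms by (simp add: card_batches field_simps)
  qed
  finally show ?thesis .
qed

lemma lists_Suc_sum:
  assumes "finite Bs"
  shows "(\<Sum>ss\<in>{ss. length ss = Suc k \<and> set ss \<subseteq> Bs}. h ss)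
       = (\<Sum>ys\<in>{ys. length ys = k \<and> set ys \<subseteq> Bs}. \<Sum>S\<in>Bs. h (ys @ [S]))"
proof -
  let ?L = "{ys. length ys = k \<and> set ys \<subseteq> Bs}"
  have fin: "finite ?L" using finite_lists_length_eq[OF assms, of k] by (simp add: conj_commute)
  have eq: "{ss. length ss = Suc k \<and> set ss \<subseteq> Bs} = (\<lambda>(ys, S). ys @ [S]) ` (?L \<times> Bs)"
  proof (intro set_eqI iffI)
    fix ss assume ss: "ss \<in> {ss. length ss = Suc k \<and> set ss \<subseteq> Bs}"
    then have "ss \<noteq> []" by auto
    then have "ss = butlast ss @ [last ss]" by simp
    moreover have "(butlast ss, last ss) \<in> ?L \<times> Bs" using ss \<open>ss \<noteq> []\<close>
      by (auto dest: in_set_butlastD)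
    ultimately show "ss \<in> (\<lambda>(ys, S). ys @ [S]) ` (?L \<times> Bs)" by (metis (no_types, lifting) case_prod_conv image_eqI)
  next
    fix ss assume "ss \<in> (\<lambda>(ys, S). ys @ [S]) ` (?L \<times> Bs)"
    then show "ss \<in> {ss. length ss = Suc k \<and> set ss \<subseteq> Bs}" by auto
  qed
  have inj: "inj_on (\<lambda>(ys, S). ys @ [S]) (?L \<times> Bs)"
    by (rule inj_onI) auto
  have "(\<Sum>ss\<in>{ss. length ss = Suc k \<and> set ss \<subseteq> Bs}. h ss) = (\<Sum>p\<in>?L \<times> Bs. h ((\<lambda>(ys, S). ys @ [S]) p))"
    unfolding eq by (rule sum.reindex[OF inj, unfolded comp_def])
  also have "\<dots> = (\<Sum>ys\<in>?L. \<Sum>S\<in>Bs. h (ys @ [S]))"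
    by (simp add: sum.cartesian_product case_prod_beta)
  finally show ?thesis .
qed

lemma be_Suc:
  assumes "finite Bs" "Bs \<noteq> {}"
  shows "batch_expect Bs (Suc k) h = batch_expect Bs k (\<lambda>ys. (\<Sum>S\<in>Bs. h (ys @ [S])) / real (card Bs))"
  using assms unfolding batch_expect_def lists_Suc_sum[OF assms(1)]
  by (simp add: sum_divide_distrib[symmetric] field_simps)

lemma be_mono:
  assumes "\<And>ss. length ss = k \<Longrightarrow> set ss \<subseteq> Bs \<Longrightarrow> h ss \<le> h' ss"
  shows "batch_expect Bs k h \<le> batch_expect Bs k h'"
  unfolding batch_expect_def using assms
  by (intro divide_right_mono sum_mono) auto

lemma be_cong:
  assumes "\<And>ss. length ss = k \<Longrightarrow> set ss \<subseteq> Bs \<Longrightarrow> h ss = h' ss"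
  shows "batch_expect Bs k h = batch_expect Bs k h'"
  unfolding batch_expect_def using assms
  by (metis (mono_tags, lifting) mem_Collect_eq sum.cong)

lemma be_add: "batch_expect Bs k (\<lambda>ss. h ss + h' ss) = batch_expect Bs k h + batch_expect Bs k h'"
  unfolding batch_expect_def by (simp add: sum.distrib add_divide_distrib)

lemma be_diff: "batch_expect Bs k (\<lambda>ss. h ss - h' ss) = batch_expect Bs k h - batch_expect Bs k h'"
  unfolding batch_expect_def by (simp add: sum_subtractf diff_divide_distrib)

lemma be_cmult: "batch_expect Bs k (\<lambda>ss. a * h ss) = a * batch_expect Bs k h"
  unfolding batch_expect_def by (simp add: sum_distrib_left[symmetric])

lemma be_const:
  assumes "finite Bs" "Bs \<noteq> {}"
  shows "batch_expect Bs k (\<lambda>ss. a) = a"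
proof -
  have "card {ss. length ss = k \<and> set ss \<subseteq> Bs} = card Bs ^ k"
    using card_lists_length_eq[OF assms(1), of k] by (simp add: conj_commute)
  moreover have "card Bs > 0" using assms by (simp add: card_gt_0_iff)
  ultimately show ?thesis unfolding batch_expect_def by simp
qed

lemma be_sum: "finite I \<Longrightarrow> batch_expect Bs k (\<lambda>ss. \<Sum>j\<in>I. h j ss) = (\<Sum>j\<in>I. batch_expect Bs k (h j))"
  by (induction I rule: finite_induct) (auto simp: be_add, simp add: batch_expect_def)

lemma be_take:
  assumes "finite Bs" "Bs \<noteq> {}" "k \<le> m"
  shows "batch_expect Bs m (\<lambda>ss. \<phi> (take k ss)) = batch_expect Bs k \<phi>"
  using assms(3)
proof (induction m)
  case 0 then show ?case by (simp add: batch_expect_def)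
next
  case (Suc m)
  show ?case
  proof (cases "k = Suc m")
    case True then show ?thesis by (simp only:) (intro be_cong, simp)
  next
    case False
    then have km: "k \<le> m" using Suc by simp
    have "batch_expect Bs (Suc m) (\<lambda>ss. \<phi> (take k ss)) = batch_expect Bs m (\<lambda>ys. (\<Sum>S\<in>Bs. \<phi> (take k (ys @ [S]))) / real (card Bs))"
      by (rule be_Suc[OF assms(1,2)])
    also have "\<dots> = batch_expect Bs m (\<lambda>ys. \<phi> (take k ys))"
    proof (rule be_cong)
      fix ys :: "nat set list" assume "length ys = m"
      then have "\<And>S. take k (ys @ [S]) = take k ys" using km by simp
      then show "(\<Sum>S\<in>Bs. \<phi> (take k (ys @ [S]))) / real (card Bs) = \<phi> (take k ys)"
        using assms by (simp add: card_gt_0_iff)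
    qed
    also have "\<dots> = batch_expect Bs k \<phi>" using Suc.IH[OF km] .
    finally show ?thesis .
  qed
qed

lemma nsq:
  fixes a v :: "'a::real_inner"
  shows "(norm (a - t *\<^sub>R v))\<^sup>2 = (norm a)\<^sup>2 - 2 * t * (v \<bullet> a) + t\<^sup>2 * (norm v)\<^sup>2"
proof -
  have "(norm (a - t *\<^sub>R v))\<^sup>2 = (a - t *\<^sub>R v) \<bullet> (a - t *\<^sub>R v)" by (rule power2_norm_eq_inner)
  also have "\<dots> = a \<bullet> a - 2 * t * (v \<bullet> a) + t * t * (v \<bullet> v)"
    by (simp add: inner_diff_left inner_diff_right inner_commute[of a v] algebra_simps)
  finally show ?thesis by (simp only: dot_square_norm power2_eq_square)
qed

lemma step_bound:
  fixes f :: "nat \<Rightarrow> 'a::real_inner \<Rightarrow> real"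
  assumes der: "\<And>p. (fS f S has_derivative (\<lambda>v. v \<bullet> gS g S p)) (at p)"
    and lip: "\<And>p q. norm (gS g S p - gS g S q) \<le> Lm * norm (p - q)"
    and Lm: "Lm > 0"
    and cvx: "strongly_convex 0 (fS f S)"
    and bdd: "bdd_below (range (fS f S))"
    and ell: "ell S \<le> (INF y. fS f S y)"
    and c: "0 < c" and gb: "0 < gb"
    and al: "\<alpha> = min (1 / (2 * c * Lm)) gb"
  shows "(c = 1 \<longrightarrow> (norm (sps_step f g ell c gb S y - xs))\<^sup>2 \<le> (norm (y - xs))\<^sup>2
            - \<alpha> * (fS f S y - fS f S xs) + 2 * gb * (fS f S xs - ell S))
       \<and> (1/2 \<le> c \<longrightarrow> (norm (sps_step f g ell c gb S y - xs))\<^sup>2 \<le> (norm (y - xs))\<^sup>2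
            - 2 * \<alpha> * (gS g S y \<bullet> (y - xs) - fS f S y + fS f S xs) + 2 * gb * (fS f S xs - ell S))"
proof -
  define h where "h = fS f S"
  define G where "G = gS g S"
  define l where "l = ell S"
  have step: "sps_step f g ell c gb S y = (if G y = 0 then y else y - (min ((h y - l) / (c * (norm (G y))\<^sup>2)) gb) *\<^sub>R G y)"
    by (simp add: sps_step_def h_def G_def l_def)
  have lle: "l \<le> h z" for z
    unfolding l_def h_def using ell cINF_lower[OF bdd, of z] by simp
  have conv: "h xs \<ge> h y + G y \<bullet> (xs - y)"
    using sc_grad[OF cvx der, of y xs] by (simp add: h_def G_def inner_commute)
  then have I: "G y \<bullet> (y - xs) \<ge> h y - h xs"
    by (simp add: inner_diff_right)
  have al_pos: "\<alpha> > 0" using al c Lm gb by simp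
  have al_gb: "\<alpha> \<le> gb" using al by simp
  have sig: "h xs - l \<ge> 0" using lle[of xs] by simp
  have Ng: "h y - l \<ge> 0" using lle[of y] by simp
  show ?thesis
  proof (cases "G y = 0")
    case True
    then have hy: "h y \<le> h xs" using conv by simp
    have A: "\<alpha> * (h y - h xs) \<le> 0" using al_pos hy by (simp add: mult_nonneg_nonpos)
    have B: "\<alpha> * (h xs - h y) \<le> gb * (h xs - l)"
      using hy al_gb lle[of y] gb by (intro mult_mono) auto
    show ?thesis using step True A B sig gb
      by (simp add: h_def[symmetric] G_def[symmetric] l_def[symmetric]) (smt (verit) mult_nonneg_nonneg)
  next
    case False
    define P where "P = (norm (G y))\<^sup>2"
    have P: "P > 0" using False by (simp add: P_def)
    define \<gamma> where "\<gamma> = min ((h y - l) / (c * P)) gb"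
    have y': "sps_step f g ell c gb S y = y - \<gamma> *\<^sub>R G y" using step False by (simp add: \<gamma>_def P_def)
    have gap: "h y - l \<ge> P / (2 * Lm)"
    proof -
      have "h (y + (- (1 / Lm)) *\<^sub>R G y) \<le> h y + ((- (1 / Lm)) *\<^sub>R G y) \<bullet> G y + Lm / 2 * (norm ((- (1 / Lm)) *\<^sub>R G y))\<^sup>2"
        using descent[OF der lip, of y "(- (1 / Lm)) *\<^sub>R gS g S y"] unfolding h_def G_def .
      also have "\<dots> = h y - P / (2 * Lm)"
        using Lm by (simp add: P_def dot_square_norm power2_eq_square field_simps)
      finally show ?thesis using lle[of "y + (- (1 / Lm)) *\<^sub>R G y"] by simp
    qed
    have r_ge: "(h y - l) / (c * P) \<ge> 1 / (2 * c * Lm)"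
    proof -
      have "1 / (2 * c * Lm) = (P / (2 * Lm)) / (c * P)" using P c Lm by (simp add: field_simps)
      also have "\<dots> \<le> (h y - l) / (c * P)" using gap P c by (intro divide_right_mono) auto
      finally show ?thesis .
    qed
    have g_ge: "\<gamma> \<ge> \<alpha>" unfolding \<gamma>_def al using r_ge by auto
    have g_le: "\<gamma> \<le> gb" unfolding \<gamma>_def by simp
    have g_pos: "\<gamma> \<ge> 0" using g_ge al_pos by simp
    have gP: "\<gamma> * c * P \<le> h y - l"
    proof -
      have "\<gamma> \<le> (h y - l) / (c * P)" unfolding \<gamma>_def by simp
      then have "\<gamma> * (c * P) \<le> h y - l" using c P by (simp add: pos_le_divide_eq)
      then show ?thesis by (simp add: mult.assoc)
    qed
    have g2P: "\<gamma>\<^sup>2 * P * c \<le> \<gamma> * (h y - l)"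
    proof -
      have "\<gamma> * (\<gamma> * c * P) \<le> \<gamma> * (h y - l)" using gP g_pos by (rule mult_left_mono)
      then show ?thesis by (simp add: power2_eq_square mult_ac)
    qed
    have expand: "(norm (y - \<gamma> *\<^sub>R G y - xs))\<^sup>2 = (norm (y - xs))\<^sup>2 - 2 * \<gamma> * (G y \<bullet> (y - xs)) + \<gamma>\<^sup>2 * P"
    proof -
      have "y - \<gamma> *\<^sub>R G y - xs = (y - xs) - \<gamma> *\<^sub>R G y" by simp
      then show ?thesis unfolding P_def by (simp only: nsq)
    qed
    have m1: "\<gamma> * (G y \<bullet> (y - xs)) \<ge> \<gamma> * (h y - h xs)" using I g_pos by (rule mult_left_mono)
    have m2: "\<gamma> * (h xs - l) \<le> gb * (h xs - l)" using g_le sig by (rule mult_right_mono)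
    have m3: "\<gamma> * (h y - l) \<ge> \<alpha> * (h y - l)" using g_ge Ng by (rule mult_right_mono)
    have m4: "\<gamma> * (G y \<bullet> (y - xs) - h y + h xs) \<ge> \<alpha> * (G y \<bullet> (y - xs) - h y + h xs)"
      using g_ge I by (intro mult_right_mono) auto
    have m5: "\<alpha> * (h xs - l) \<ge> 0" using al_pos sig by simp
    have A: "c = 1 \<longrightarrow> (norm (y - \<gamma> *\<^sub>R G y - xs))\<^sup>2 \<le> (norm (y - xs))\<^sup>2 - \<alpha> * (h y - h xs) + 2 * gb * (h xs - l)"
    proof
      assume "c = 1"
      then have "\<gamma>\<^sup>2 * P \<le> \<gamma> * (h y - l)" using g2P by simp
      then show "(norm (y - \<gamma> *\<^sub>R G y - xs))\<^sup>2 \<le> (norm (y - xs))\<^sup>2 - \<alpha> * (h y - h xs) + 2 * gb * (h xs - l)"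
        unfolding expand using m1 m2 m3 m5 by (simp add: algebra_simps)
    qed
    have B: "1/2 \<le> c \<longrightarrow> (norm (y - \<gamma> *\<^sub>R G y - xs))\<^sup>2 \<le> (norm (y - xs))\<^sup>2 - 2 * \<alpha> * (G y \<bullet> (y - xs) - h y + h xs) + 2 * gb * (h xs - l)"
    proof
      assume c2: "1/2 \<le> c"
      have q: "\<gamma> * (h y - l) \<ge> 0" using g_pos Ng by simp
      have "\<gamma> * (h y - l) * 1 \<le> \<gamma> * (h y - l) * (2 * c)" using q c2 by (intro mult_left_mono) auto
      then have "\<gamma>\<^sup>2 * P * c \<le> \<gamma> * (h y - l) * (2 * c)" using g2P by linarith
      then have "(\<gamma>\<^sup>2 * P) * c \<le> (2 * (\<gamma> * (h y - l))) * c" by (simp add: mult_ac)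
      then have "\<gamma>\<^sup>2 * P \<le> 2 * (\<gamma> * (h y - l))" using c by simp
      then show "(norm (y - \<gamma> *\<^sub>R G y - xs))\<^sup>2 \<le> (norm (y - xs))\<^sup>2 - 2 * \<alpha> * (G y \<bullet> (y - xs) - h y + h xs) + 2 * gb * (h xs - l)"
        unfolding expand using m2 m4 by (simp add: algebra_simps)
    qed
    show ?thesis using A B unfolding y' h_def G_def l_def by blast
  qed
qed



lemma aux_id: "m \<noteq> 0 \<Longrightarrow> (1 - m) * (C / m) + C = C / (m::real)"
  by (simp add: field_simps)

theorem theorem2:
  fixes f :: "nat \<Rightarrow> 'a::euclidean_space \<Rightarrow> real"
    and g :: "nat \<Rightarrow> 'a \<Rightarrow> 'a"
    and L :: "nat \<Rightarrow> real"
    and n B :: nat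
    and ell :: "nat set \<Rightarrow> real"
    and c gb :: real
    and x0 xs :: 'a
  defines "F \<equiv> (\<lambda>x. (\<Sum>i<n. f i x) / real n)"
    and "\<alpha> \<equiv> min (1 / (2 * c * Max (L ` {..<n}))) gb"
    and "x \<equiv> sps_iter f g ell c gb x0"
  assumes n_pos: "1 \<le> n"
    and B_range: "1 \<le> B" "B \<le> n"
    and grad: "\<And>i y. i < n \<Longrightarrow> GDERIV (f i) y :> g i y"
    and convex: "\<And>i. i < n \<Longrightarrow> convex_on UNIV (f i)"
    and L_pos: "\<And>i. i < n \<Longrightarrow> 0 < L i"
    and smooth: "\<And>i y z. i < n \<Longrightarrow> norm (g i y - g i z) \<le> L i * norm (y - z)"
    and fS_bdd: "\<And>S. S \<in> batches n B \<Longrightarrow> bdd_below (range (fS f S))"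
    and ell_le: "\<And>S. S \<in> batches n B \<Longrightarrow> ell S \<le> (INF y. fS f S y)"
    and c_pos: "0 < c" and gb_pos: "0 < gb"
    and xs_min: "\<And>y. F xs \<le> F y"
  shows "(c = 1 \<longrightarrow> (\<forall>K\<ge>1.
            batch_expect (batches n B) K
              (\<lambda>ss. F ((1 / real K) *\<^sub>R (\<Sum>k<K. x (take k ss))) - F xs)
            \<le> (norm (x0 - xs))\<^sup>2 / (\<alpha> * real K) + 2 * gb * sigma_hat f ell n B xs / \<alpha>))
       \<and> (\<forall>\<mu>>0. strongly_convex \<mu> F \<and> 1/2 \<le> c \<longrightarrow> (\<forall>k.
            batch_expect (batches n B) k (\<lambda>ss. (norm (x ss - xs))\<^sup>2)
            \<le> (1 - \<mu> * \<alpha>) ^ k * (norm (x0 - xs))\<^sup>2 + 2 * gb * sigma_hat f ell n B xs / (\<mu> * \<alpha>)))"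
proof -
  let ?Bs = "batches n B"
  define N where "N = real (card ?Bs)"
  have finB: "finite ?Bs" by (rule finite_batches)
  have neB: "?Bs \<noteq> {}" by (rule batches_ne[OF B_range(2)])
  have N_pos: "N > 0" unfolding N_def using finB neB by (simp add: card_gt_0_iff)
  define Lm where "Lm = Max (L ` {..<n})"
  have L_le: "i < n \<Longrightarrow> L i \<le> Lm" for i unfolding Lm_def by (intro Max_ge) auto
  have Lm_pos: "Lm > 0" using L_le[of 0] L_pos[of 0] n_pos by simp
  have al: "\<alpha> = min (1 / (2 * c * Lm)) gb" unfolding \<alpha>_def Lm_def ..
  have al_pos: "\<alpha> > 0" using al c_pos Lm_pos gb_pos by simp
  have derS: "(fS f S has_derivative (\<lambda>v. v \<bullet> gS g S p)) (at p)" if "S \<subseteq> {..<n}" for S p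
    using that grad by (intro deriv_fS) (auto intro: finite_subset simp: gderiv_def)
  have lipS: "norm (gS g S p - gS g S q) \<le> Lm * norm (p - q)" if "S \<subseteq> {..<n}" "S \<noteq> {}" for S p q
  proof (rule lip_gS)
    show "finite S" using that by (auto intro: finite_subset)
    show "S \<noteq> {}" by fact
    fix i assume "i \<in> S"
    then have i: "i < n" using that by auto
    have "norm (g i p - g i q) \<le> L i * norm (p - q)" using smooth[OF i] .
    also have "\<dots> \<le> Lm * norm (p - q)" using L_le[OF i] by (intro mult_right_mono) auto
    finally show "norm (g i p - g i q) \<le> Lm * norm (p - q)" .
  qed
  have convS: "convex_on UNIV (fS f S)" if "S \<subseteq> {..<n}" for S
    using that convex by (intro convex_fS) (auto intro: finite_subset)
  have F_eq: "F = fS f {..<n}" unfolding F_def by (auto simp: fun_eq_iff fS_def)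
  define GF where "GF = gS g {..<n}"
  have derF: "\<And>p. (F has_derivative (\<lambda>v. v \<bullet> GF p)) (at p)" unfolding F_eq GF_def by (rule derS) simp
  have lipF: "\<And>p q. norm (GF p - GF q) \<le> Lm * norm (p - q)" unfolding GF_def using n_pos by (intro lipS) (auto simp: lessThan_empty_iff)
  have convF: "convex_on UNIV F" unfolding F_eq by (rule convS) simp
  have Sprops: "S \<subseteq> {..<n}" "S \<noteq> {}" "card S = B" if "S \<in> ?Bs" for S
    using that B_range by (auto simp: batches_def)
  have stepS: "(c = 1 \<longrightarrow> (norm (sps_step f g ell c gb S y - xs))\<^sup>2 \<le> (norm (y - xs))\<^sup>2
            - \<alpha> * (fS f S y - fS f S xs) + 2 * gb * (fS f S xs - ell S))
       \<and> (1/2 \<le> c \<longrightarrow> (norm (sps_step f g ell c gb S y - xs))\<^sup>2 \<le> (norm (y - xs))\<^sup>2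
            - 2 * \<alpha> * (gS g S y \<bullet> (y - xs) - fS f S y + fS f S xs) + 2 * gb * (fS f S xs - ell S))"
    if "S \<in> ?Bs" for S y
  proof (rule step_bound[where Lm=Lm])
    show "\<And>p. (fS f S has_derivative (\<lambda>v. v \<bullet> gS g S p)) (at p)" using Sprops[OF that] by (intro derS) auto
    show "\<And>p q. norm (gS g S p - gS g S q) \<le> Lm * norm (p - q)" using Sprops[OF that] by (intro lipS) auto
    show "strongly_convex 0 (fS f S)" using Sprops[OF that] by (intro convex_sc0 convS) auto
  qed (use Lm_pos fS_bdd[OF that] ell_le[OF that] c_pos gb_pos al in auto)
  define \<sigma> where "\<sigma> = sigma_hat f ell n B xs"
  have sig_sum: "(\<Sum>S\<in>?Bs. fS f S xs - ell S) = N * \<sigma>"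
    unfolding \<sigma>_def sigma_hat_def N_def using N_pos N_def by simp
  have sig_pos: "\<sigma> \<ge> 0"
  proof -
    have "(\<Sum>S\<in>?Bs. fS f S xs - ell S) \<ge> 0"
    proof (intro sum_nonneg)
      fix S assume S: "S \<in> ?Bs"
      show "0 \<le> fS f S xs - ell S" using ell_le[OF S] cINF_lower[OF fS_bdd[OF S], of xs] by simp
    qed
    then show ?thesis using sig_sum N_pos by (simp add: zero_le_mult_iff)
  qed
  have fsum: "(\<Sum>S\<in>?Bs. fS f S y) = N * F y" for y
  proof -
    have "(\<Sum>S\<in>?Bs. fS f S y) = (\<Sum>S\<in>?Bs. (1 / real (card S)) *\<^sub>R (\<Sum>i\<in>S. f i y))"
      by (simp add: fS_def)
    also have "\<dots> = (N / real n) *\<^sub>R (\<Sum>i<n. f i y)" unfolding N_def using B_range by (rule batch_sum)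
    finally show ?thesis by (simp add: F_def)
  qed
  have gsum: "(\<Sum>S\<in>?Bs. gS g S y) = N *\<^sub>R GF y" for y
  proof -
    have "(\<Sum>S\<in>?Bs. gS g S y) = (\<Sum>S\<in>?Bs. (1 / real (card S)) *\<^sub>R (\<Sum>i\<in>S. g i y))"
      by (simp add: gS_def)
    also have "\<dots> = (N / real n) *\<^sub>R (\<Sum>i<n. g i y)" unfolding N_def using B_range by (rule batch_sum)
    finally show ?thesis by (simp add: GF_def gS_def)
  qed
  have x_snoc: "x (ys @ [S]) = sps_step f g ell c gb S (x ys)" for ys S
    by (simp add: x_def sps_iter_def)
  have x_nil: "x [] = x0" by (simp add: x_def sps_iter_def)
  have e0: "batch_expect ?Bs 0 h = h []" for h
  proof -
    have "{ss. length ss = 0 \<and> set ss \<subseteq> ?Bs} = {[]}" by auto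
    then show ?thesis by (simp add: batch_expect_def)
  qed
  have enonneg: "batch_expect ?Bs k (\<lambda>ss. (norm (x ss - xs))\<^sup>2) \<ge> 0" for k
    using be_mono[of k ?Bs "\<lambda>_. 0" "\<lambda>ss. (norm (x ss - xs))\<^sup>2"] be_const[OF finB neB, of k 0] by simp
  define e where "e k = batch_expect ?Bs k (\<lambda>ss. (norm (x ss - xs))\<^sup>2)" for k
  have e_0: "e 0 = (norm (x0 - xs))\<^sup>2" unfolding e_def e0 x_nil ..
  have P1: "c = 1 \<longrightarrow> (\<forall>K\<ge>1.
            batch_expect (batches n B) K
              (\<lambda>ss. F ((1 / real K) *\<^sub>R (\<Sum>k<K. x (take k ss))) - F xs)
            \<le> (norm (x0 - xs))\<^sup>2 / (\<alpha> * real K) + 2 * gb * sigma_hat f ell n B xs / \<alpha>)"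
  proof (intro impI allI)
    assume c1: "c = 1"
    define \<phi> where "\<phi> k = batch_expect ?Bs k (\<lambda>ss. F (x ss) - F xs)" for k
    have rec: "e (Suc k) \<le> e k - \<alpha> * \<phi> k + 2 * gb * \<sigma>" for k
    proof -
      have "e (Suc k) = batch_expect ?Bs k (\<lambda>ys. (\<Sum>S\<in>?Bs. (norm (x (ys @ [S]) - xs))\<^sup>2) / N)"
        unfolding e_def N_def by (rule be_Suc[OF finB neB])
      also have "\<dots> \<le> batch_expect ?Bs k (\<lambda>ys. (norm (x ys - xs))\<^sup>2 - \<alpha> * (F (x ys) - F xs) + 2 * gb * \<sigma>)"
      proof (rule be_mono)
        fix ys :: "nat set list"
        let ?y = "x ys"
        have "(\<Sum>S\<in>?Bs. (norm (x (ys @ [S]) - xs))\<^sup>2) \<le> (\<Sum>S\<in>?Bs. (norm (?y - xs))\<^sup>2 - \<alpha> * (fS f S ?y - fS f S xs) + 2 * gb * (fS f S xs - ell S))"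
          unfolding x_snoc using stepS c1 by (intro sum_mono) auto
        also have "\<dots> = N * (norm (?y - xs))\<^sup>2 - \<alpha> * ((\<Sum>S\<in>?Bs. fS f S ?y) - (\<Sum>S\<in>?Bs. fS f S xs)) + 2 * gb * (\<Sum>S\<in>?Bs. fS f S xs - ell S)"
          by (simp only: sum.distrib sum_subtractf sum_distrib_left[symmetric] sum_constant N_def)
        also have "\<dots> = N * (norm (?y - xs))\<^sup>2 - \<alpha> * (N * F ?y - N * F xs) + 2 * gb * (N * \<sigma>)"
          unfolding fsum sig_sum ..
        finally show "(\<Sum>S\<in>?Bs. (norm (x (ys @ [S]) - xs))\<^sup>2) / N \<le> (norm (?y - xs))\<^sup>2 - \<alpha> * (F ?y - F xs) + 2 * gb * \<sigma>"
          using N_pos by (simp add: divide_simps algebra_simps)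
      qed
      also have "\<dots> = e k - \<alpha> * \<phi> k + 2 * gb * \<sigma>"
        unfolding e_def \<phi>_def by (simp add: be_add be_diff be_cmult be_const[OF finB neB])
      finally show ?thesis .
    qed
    have tel: "\<alpha> * (\<Sum>k<K. \<phi> k) + e K \<le> e 0 + 2 * gb * \<sigma> * real K" for K
    proof (induction K)
      case 0 then show ?case by simp
    next
      case (Suc K) then show ?case using rec[of K] by (simp add: algebra_simps)
    qed
    fix K :: nat assume K: "1 \<le> K"
    have Kp: "real K > 0" using K by simp
    have "batch_expect ?Bs K (\<lambda>ss. F ((1 / real K) *\<^sub>R (\<Sum>k<K. x (take k ss))) - F xs)
        \<le> batch_expect ?Bs K (\<lambda>ss. (1 / real K) * (\<Sum>k<K. F (x (take k ss)) - F xs))"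
    proof (rule be_mono)
      fix ss :: "nat set list"
      have "F ((1 / real K) *\<^sub>R (\<Sum>k<K. x (take k ss))) = F (\<Sum>k<K. (1 / real K) *\<^sub>R x (take k ss))"
        by (simp add: scaleR_sum_right)
      also have "\<dots> \<le> (\<Sum>k<K. (1 / real K) * F (x (take k ss)))"
        using K by (intro convex_on_sum[OF _ _ convF]) (auto simp: lessThan_empty_iff)
      finally show "F ((1 / real K) *\<^sub>R (\<Sum>k<K. x (take k ss))) - F xs \<le> (1 / real K) * (\<Sum>k<K. F (x (take k ss)) - F xs)"
        using Kp by (simp add: sum_distrib_left[symmetric] sum_subtractf right_diff_distrib sum_divide_distrib)
    qed
    also have "\<dots> = (1 / real K) * (\<Sum>k<K. \<phi> k)"
      unfolding be_cmult be_sum[OF finite_lessThan] \<phi>_def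
      using be_take[OF finB neB, where \<phi>="\<lambda>ss. F (x ss) - F xs"] by simp
    also have "\<dots> \<le> (1 / real K) * ((e 0 + 2 * gb * \<sigma> * real K) / \<alpha>)"
    proof -
      have "\<alpha> * (\<Sum>k<K. \<phi> k) \<le> e 0 + 2 * gb * \<sigma> * real K" using tel[of K] enonneg[of K] e_def by simp
      then have "(\<Sum>k<K. \<phi> k) \<le> (e 0 + 2 * gb * \<sigma> * real K) / \<alpha>" using al_pos by (simp add: pos_le_divide_eq mult.commute)
      then show ?thesis using Kp by (intro mult_left_mono) auto
    qed
    also have "\<dots> = (norm (x0 - xs))\<^sup>2 / (\<alpha> * real K) + 2 * gb * sigma_hat f ell n B xs / \<alpha>"
      using Kp al_pos unfolding e_0 \<sigma>_def by (simp add: field_simps)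
    finally show "batch_expect ?Bs K (\<lambda>ss. F ((1 / real K) *\<^sub>R (\<Sum>k<K. x (take k ss))) - F xs)
        \<le> (norm (x0 - xs))\<^sup>2 / (\<alpha> * real K) + 2 * gb * sigma_hat f ell n B xs / \<alpha>" .
  qed
  have P2: "\<forall>\<mu>>0. strongly_convex \<mu> F \<and> 1/2 \<le> c \<longrightarrow> (\<forall>k.
            batch_expect (batches n B) k (\<lambda>ss. (norm (x ss - xs))\<^sup>2)
            \<le> (1 - \<mu> * \<alpha>) ^ k * (norm (x0 - xs))\<^sup>2 + 2 * gb * sigma_hat f ell n B xs / (\<mu> * \<alpha>))"
  proof (intro allI impI)
    fix \<mu> :: real assume \<mu>: "\<mu> > 0" and H: "strongly_convex \<mu> F \<and> 1/2 \<le> c"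
    then have sc: "strongly_convex \<mu> F" and c2: "1/2 \<le> c" by auto
    have scg: "F z \<ge> F p + GF p \<bullet> (z - p) + \<mu> / 2 * (norm (z - p))\<^sup>2" for z p
      using sc_grad[OF sc derF, of p z] by (simp add: inner_commute)
    have mu_le: "\<mu> \<le> Lm"
    proof -
      obtain b :: 'a where b: "b \<in> Basis" using nonempty_Basis by blast
      have bn: "norm b > 0" using nonzero_Basis[OF b] by simp
      have "F (xs + b) \<ge> F xs + GF xs \<bullet> b + \<mu> / 2 * (norm b)\<^sup>2" using scg[where z="xs + b" and p=xs] by simp
      moreover have "F (xs + b) \<le> F xs + b \<bullet> GF xs + Lm / 2 * (norm b)\<^sup>2" by (rule descent[OF derF lipF])
      ultimately have "\<mu> / 2 * (norm b)\<^sup>2 \<le> Lm / 2 * (norm b)\<^sup>2" by (simp add: inner_commute)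
      then show ?thesis using bn by simp
    qed
    have mal: "\<mu> * \<alpha> \<le> 1"
    proof -
      have "\<alpha> \<le> 1 / (2 * c * Lm)" using al by simp
      also have "\<dots> \<le> 1 / Lm" using c2 Lm_pos by (simp add: field_simps)
      finally have "\<mu> * \<alpha> \<le> \<mu> * (1 / Lm)" using \<mu> by (intro mult_left_mono) auto
      also have "\<dots> \<le> 1" using mu_le Lm_pos by (simp add: field_simps)
      finally show ?thesis .
    qed
    have mal_pos: "\<mu> * \<alpha> > 0" using \<mu> al_pos by simp
    have rec: "e (Suc k) \<le> (1 - \<mu> * \<alpha>) * e k + 2 * gb * \<sigma>" for k
    proof -
      have "e (Suc k) = batch_expect ?Bs k (\<lambda>ys. (\<Sum>S\<in>?Bs. (norm (x (ys @ [S]) - xs))\<^sup>2) / N)"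
        unfolding e_def N_def by (rule be_Suc[OF finB neB])
      also have "\<dots> \<le> batch_expect ?Bs k (\<lambda>ys. (1 - \<mu> * \<alpha>) * (norm (x ys - xs))\<^sup>2 + 2 * gb * \<sigma>)"
      proof (rule be_mono)
        fix ys :: "nat set list"
        let ?y = "x ys"
        let ?D = "(norm (?y - xs))\<^sup>2"
        have "(\<Sum>S\<in>?Bs. (norm (x (ys @ [S]) - xs))\<^sup>2) \<le> (\<Sum>S\<in>?Bs. ?D - 2 * \<alpha> * (gS g S ?y \<bullet> (?y - xs) - fS f S ?y + fS f S xs) + 2 * gb * (fS f S xs - ell S))"
          unfolding x_snoc using stepS c2 by (intro sum_mono) auto
        also have "\<dots> = N * ?D - 2 * \<alpha> * ((\<Sum>S\<in>?Bs. gS g S ?y) \<bullet> (?y - xs) - (\<Sum>S\<in>?Bs. fS f S ?y) + (\<Sum>S\<in>?Bs. fS f S xs)) + 2 * gb * (\<Sum>S\<in>?Bs. fS f S xs - ell S)"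
          by (simp only: sum.distrib sum_subtractf sum_distrib_left[symmetric] sum_constant inner_sum_left N_def)
        also have "\<dots> = N * ?D - 2 * \<alpha> * (N * (GF ?y \<bullet> (?y - xs) - F ?y + F xs)) + 2 * gb * (N * \<sigma>)"
          unfolding fsum gsum sig_sum by (simp add: algebra_simps)
        also have "\<dots> \<le> N * ?D - 2 * \<alpha> * (N * (\<mu> / 2 * ?D)) + 2 * gb * (N * \<sigma>)"
        proof -
          have "F xs \<ge> F ?y + GF ?y \<bullet> (xs - ?y) + \<mu> / 2 * (norm (xs - ?y))\<^sup>2" by (rule scg)
          moreover have "GF ?y \<bullet> (xs - ?y) = - (GF ?y \<bullet> (?y - xs))" by (simp add: inner_diff_right)
          moreover have "norm (xs - ?y) = norm (?y - xs)" by (rule norm_minus_commute)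
          ultimately have "\<mu> / 2 * ?D \<le> GF ?y \<bullet> (?y - xs) - F ?y + F xs" by simp
          then have "N * (\<mu> / 2 * ?D) \<le> N * (GF ?y \<bullet> (?y - xs) - F ?y + F xs)" using N_pos by simp
          then show ?thesis using al_pos by simp
        qed
        also have "\<dots> = N * ((1 - \<mu> * \<alpha>) * ?D + 2 * gb * \<sigma>)" by (simp add: algebra_simps)
        finally show "(\<Sum>S\<in>?Bs. (norm (x (ys @ [S]) - xs))\<^sup>2) / N \<le> (1 - \<mu> * \<alpha>) * ?D + 2 * gb * \<sigma>"
          using N_pos by (simp add: divide_simps mult.commute)
      qed
      also have "\<dots> = (1 - \<mu> * \<alpha>) * e k + 2 * gb * \<sigma>"
        unfolding e_def by (simp add: be_add be_cmult be_const[OF finB neB])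
      finally show ?thesis .
    qed
    fix k
    show "batch_expect ?Bs k (\<lambda>ss. (norm (x ss - xs))\<^sup>2) \<le> (1 - \<mu> * \<alpha>) ^ k * (norm (x0 - xs))\<^sup>2 + 2 * gb * sigma_hat f ell n B xs / (\<mu> * \<alpha>)"
      unfolding e_def[symmetric] \<sigma>_def[symmetric] e_0[symmetric]
    proof (induction k)
      case 0 then show ?case using sig_pos gb_pos mal_pos by simp
    next
      case (Suc k)
      let ?q = "1 - \<mu> * \<alpha>"
      have q: "?q \<ge> 0" using mal by simp
      have "e (Suc k) \<le> ?q * e k + 2 * gb * \<sigma>" by (rule rec)
      also have "\<dots> \<le> ?q * (?q ^ k * e 0 + 2 * gb * \<sigma> / (\<mu> * \<alpha>)) + 2 * gb * \<sigma>"
        using Suc.IH q by (intro add_right_mono mult_left_mono) auto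
      also have "\<dots> = ?q ^ Suc k * e 0 + (?q * (2 * gb * \<sigma> / (\<mu> * \<alpha>)) + 2 * gb * \<sigma>)"
        by (simp only: distrib_left power_Suc mult.assoc add.assoc)
      also have "?q * (2 * gb * \<sigma> / (\<mu> * \<alpha>)) + 2 * gb * \<sigma> = 2 * gb * \<sigma> / (\<mu> * \<alpha>)"
        by (rule aux_id) (use mal_pos in force)
      finally show ?case .
    qed
  qed
  show ?thesis using P1 P2 by blast
qed

end
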